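(* Let $T$ be a perfect tree, $\rho$ a weight on $T$ and $T_0$ a finite subtree of $T$. Let $k\in\omega$ and let $D\subseteq T^k$ be dense open. Then there is a finite subtree $T_1$ of $T$ with $T_0\lhd_\rho T_1$ such that for every $k$-element set $\{\sigma_0,\dots,\sigma_{k-1}\}\subseteq\mathrm{term}(T_0)$ and all $\sigma_0',\dots,\sigma_{k-1}'\in\mathrm{term}(T_1)$ with $\sigma_l\subseteq\sigma_l'$ for all $l<k$, we have $(\sigma_0',\dots,\sigma_{k-1}')\in D$.
   Context: Trees are subsets of $A^{<\omega}$ ($A$ countable) closed under initial segments; perfect means every node has two incomparable extensions; $T_s=\{t\in T:t\subseteq s\text{ or }s\subseteq t\}$. $T$ is viewed as a poset where longer nodes are stronger (extension), $T^k$ carries the product order, and $D\subseteq T^k$ is dense open in this poset. A weight on $T$ is a map $\rho:T\times T\to[T]^{<\omega}$ with $\rho(s,t)\subseteq T_s\setminus T_t$. For a finite tree $R$, $\mathrm{term}(R)$ is its set of terminal nodes. For finite trees, $T_0\sqsubset T_1$ means $T_0\subsetneq T_1$ and every $t\in T_1\setminus T_0$ extends some element of $\mathrm{term}(T_0)$. For finite subtrees $T_0,T_1$ of $T$, $T_0\lhd_\rho T_1$ (also written $T_1\rhd_\rho T_0$) means $T_0\sqsubset T_1$ and for every $\sigma\in\mathrm{term}(T_0)$ there are $N\ge 2$ and an injective sequence $\langle s_i:i<N\rangle$ in $(T_1)_\sigma$ with $s_0=\sigma$, $s_{N-1}\in\mathrm{term}(T_1)$ and $\rho(s_i,s_{i+1})\subseteq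 T_1$ for all $i<N-1$. *)

theory Defs
  imports Main "HOL-Library.Countable" "HOL-Library.Sublist"
begin

text \<open>Nodes of A^{<omega} are finite lists over a countable type; s \<subseteq> t (initial segment)
  is prefix s t.\<close>

definition is_tree :: "'a list set \<Rightarrow> bool" where
  "is_tree T \<longleftrightarrow> T \<noteq> {} \<and> (\<forall>t\<in>T. \<forall>s. prefix s t \<longrightarrow> s \<in> T)"

definition perfect_tree :: "'a list set \<Rightarrow> bool" where
  "perfect_tree T \<longleftrightarrow> is_tree T \<and>
     (\<forall>s\<in>T. \<exists>t\<in>T. \<exists>u\<in>T. prefix s t \<and> prefix s u \<and> \<not> prefix t u \<and> \<not> prefix u t)"

definition subtree_at :: "'a list set \<Rightarrow> 'a list \<Rightarrow> 'a list set" where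
  "subtree_at T s = {t\<in>T. prefix t s \<or> prefix s t}"

definition is_weight :: "'a list set \<Rightarrow> ('a list \<Rightarrow> 'a list \<Rightarrow> 'a list set) \<Rightarrow> bool" where
  "is_weight T \<rho> \<longleftrightarrow> (\<forall>s\<in>T. \<forall>t\<in>T. finite (\<rho> s t) \<and> \<rho> s t \<subseteq> subtree_at T s - subtree_at T t)"

definition finite_subtree :: "'a list set \<Rightarrow> 'a list set \<Rightarrow> bool" where
  "finite_subtree R T \<longleftrightarrow> is_tree R \<and> finite R \<and> R \<subseteq> T"

definition term_nodes :: "'a list set \<Rightarrow> 'a list set" where
  "term_nodes R = {t\<in>R. \<not> (\<exists>u\<in>R. strict_prefix t u)}"

definition sqsub :: "'a list set \<Rightarrow> 'a list set \<Rightarrow> bool" where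
  "sqsub T0 T1 \<longleftrightarrow> T0 \<subset> T1 \<and> (\<forall>t\<in>T1 - T0. \<exists>\<sigma>\<in>term_nodes T0. prefix \<sigma> t)"

definition rho_lhd :: "('a list \<Rightarrow> 'a list \<Rightarrow> 'a list set) \<Rightarrow> 'a list set \<Rightarrow> 'a list set \<Rightarrow> bool" where
  "rho_lhd \<rho> T0 T1 \<longleftrightarrow> sqsub T0 T1 \<and>
     (\<forall>\<sigma>\<in>term_nodes T0. \<exists>ss. length ss \<ge> 2 \<and> distinct ss \<and> set ss \<subseteq> subtree_at T1 \<sigma> \<and>
        ss ! 0 = \<sigma> \<and> ss ! (length ss - 1) \<in> term_nodes T1 \<and>
        (\<forall>i. i + 1 < length ss \<longrightarrow> \<rho> (ss ! i) (ss ! (i + 1)) \<subseteq> T1))"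

text \<open>T^k as lists of length k with entries in T; q is stronger than p (q \<le> p) in the
  product order iff each coordinate of q extends the corresponding one of p.\<close>

definition power_tree :: "'a list set \<Rightarrow> nat \<Rightarrow> 'a list list set" where
  "power_tree T k = {p. length p = k \<and> set p \<subseteq> T}"

definition prod_le :: "'a list list \<Rightarrow> 'a list list \<Rightarrow> bool" where
  "prod_le q p \<longleftrightarrow> length q = length p \<and> (\<forall>i<length p. prefix (p ! i) (q ! i))"

definition dense_open :: "'a list set \<Rightarrow> nat \<Rightarrow> 'a list list set \<Rightarrow> bool" where
  "dense_open T k D \<longleftrightarrow> D \<subseteq> power_tree T k \<and>
     (\<forall>p\<in>power_tree T k. \<exists>q\<in>D. prod_le q p) \<and>
     (\<forall>p\<in>D. \<forall>q\<in>power_tree T k. prod_le q p \<longrightarrow> q \<in> D)"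

end

theory Submission
  imports Defs
begin


lemma term_eq:
  assumes "\<sigma> \<in> term_nodes R" "\<tau> \<in> term_nodes R" "prefix \<sigma> w" "prefix \<tau> w"
  shows "\<sigma> = \<tau>"
proof -
  have "prefix \<sigma> \<tau> \<or> prefix \<tau> \<sigma>" using prefix_same_cases assms(3,4) by blast
  then show ?thesis using assms(1,2) unfolding term_nodes_def
    by (metis (no_types, lifting) mem_Collect_eq strict_prefix_def)
qed

lemma below_term:
  assumes "finite R" "t \<in> R"
  shows "\<exists>\<sigma>\<in>term_nodes R. prefix t \<sigma>"
proof -
  let ?U = "{u\<in>R. prefix t u}"
  have fin: "finite ?U" using assms by auto
  have ne: "?U \<noteq> {}" using assms by auto
  have "Max (length ` ?U) \<in> length ` ?U" using fin ne by (intro Max_in) auto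
  then obtain u where u: "u \<in> ?U" "length u = Max (length ` ?U)" by auto
  have mx: "\<forall>v\<in>?U. length v \<le> length u" using fin u(2) by auto
  have "u \<in> term_nodes R"
    unfolding term_nodes_def
  proof (safe)
    show "u \<in> R" using u by auto
  next
    fix v assume "v \<in> R" "strict_prefix u v"
    then have "v \<in> ?U" "length u < length v" using u(1) prefix_length_less
      by (auto intro: prefix_order.trans simp: strict_prefix_def)
    then show False using mx by force
  qed
  then show ?thesis using u by auto
qed

lemma strict_ext:
  assumes "perfect_tree T" "x \<in> T"
  shows "\<exists>y\<in>T. strict_prefix x y"
proof -
  obtain t u where "t \<in> T" "u \<in> T" "prefix x t" "prefix x u" "\<not> prefix t u" "\<not> prefix u t"
    using assms unfolding perfect_tree_def by blast
  then show ?thesis by (metis strict_prefix_def)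
qed

lemma density_aux:
  assumes dens: "dense_open T k D" and "finite L" and FT: "F \<subseteq> T"
    and "\<forall>p\<in>L. set p \<subseteq> F \<and> length p = k"
  shows "\<exists>e. (\<forall>x\<in>F. prefix x (e x) \<and> e x \<in> T) \<and> (\<forall>p\<in>L. distinct p \<longrightarrow> map e p \<in> D)"
  using assms(2,4)
proof (induction L rule: finite_induct)
  case empty
  show ?case using FT by (intro exI[of _ id]) auto
next
  case (insert p L)
  then obtain e where e1: "\<forall>x\<in>F. prefix x (e x) \<and> e x \<in> T"
    and e2: "\<forall>p\<in>L. distinct p \<longrightarrow> map e p \<in> D" by auto
  have pF: "set p \<subseteq> F" "length p = k" using insert by auto
  show ?case
  proof (cases "distinct p")
    case False
    then show ?thesis using e1 e2 by auto
  next
    case True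
    have "map e p \<in> power_tree T k" using pF e1 unfolding power_tree_def by auto
    then obtain q where q: "q \<in> D" "prod_le q (map e p)"
      using dens unfolding dense_open_def by blast
    have qT: "set q \<subseteq> T" "length q = k" using q dens pF
      unfolding dense_open_def power_tree_def prod_le_def by auto
    define e' where "e' x = (case map_of (zip p q) x of Some y \<Rightarrow> y | None \<Rightarrow> e x)" for x
    have e'_in: "e' (p ! i) = q ! i" if "i < k" for i
      using map_of_zip_nth[of p q i] True that pF qT unfolding e'_def by simp
    have e'_out: "e' x = e x" if "x \<notin> set p" for x
    proof -
      have "fst ` set (zip p q) = set p" using pF qT by (metis map_fst_zip set_map)
      then have "map_of (zip p q) x = None" using that
        by (simp add: map_of_eq_None_iff)
      then show ?thesis unfolding e'_def by simp
    qed
    have ext: "prefix (e x) (e' x) \<and> e' x \<in> T" if "x \<in> F" for x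
    proof (cases "x \<in> set p")
      case True
      then obtain i where i: "i < k" "x = p ! i" using pF by (auto simp: in_set_conv_nth)
      have "prefix (map e p ! i) (q ! i)" using q(2) i pF unfolding prod_le_def by auto
      then show ?thesis using i e'_in pF qT by (auto simp: nth_mem subsetD)
    next
      case False
      then show ?thesis using e'_out e1 that by auto
    qed
    have "map e' p = q" using e'_in pF qT by (intro nth_equalityI) auto
    then have m1: "map e' p \<in> D" using q by simp
    have m2: "map e' p' \<in> D" if "p' \<in> L" "distinct p'" for p'
    proof -
      have a: "map e p' \<in> D" using e2 that by auto
      have pF': "set p' \<subseteq> F" "length p' = k" using insert that by auto
      have "map e' p' \<in> power_tree T k" using pF' ext unfolding power_tree_def by auto
      moreover have "prod_le (map e' p') (map e p')" unfolding prod_le_def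
        using pF' ext by (auto simp: nth_mem subsetD)
      ultimately show ?thesis using a dens unfolding dense_open_def by blast
    qed
    have "\<forall>x\<in>F. prefix x (e' x) \<and> e' x \<in> T"
      using ext e1 by (meson prefix_order.trans)
    then show ?thesis using m1 m2 by (intro exI[of _ e']) auto
  qed
qed

lemma density:
  assumes dens: "dense_open T k D" and "finite F" and FT: "F \<subseteq> T"
  shows "\<exists>e. (\<forall>x\<in>F. prefix x (e x) \<and> e x \<in> T) \<and>
     (\<forall>p. length p = k \<and> distinct p \<and> set p \<subseteq> e ` F \<longrightarrow> p \<in> D)"
proof -
  let ?L = "{p. set p \<subseteq> F \<and> length p = k}"
  have fin: "finite ?L" by (rule finite_lists_length_eq[OF assms(2)])
  have "\<forall>p\<in>?L. set p \<subseteq> F \<and> length p = k" by simp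
  from density_aux[OF dens fin FT this] obtain e where e1: "\<forall>x\<in>F. prefix x (e x) \<and> e x \<in> T"
    and e2: "\<forall>p\<in>?L. distinct p \<longrightarrow> map e p \<in> D" by blast
  have "p \<in> D" if "length p = k" "distinct p" "set p \<subseteq> e ` F" for p
  proof -
    define p0 where "p0 = map (inv_into F e) p"
    have "map e p0 = p" unfolding p0_def map_map o_def
      by (rule map_idI) (use that(3) in \<open>auto intro: f_inv_into_f\<close>)
    moreover have "distinct p0" unfolding p0_def using that(2,3)
      by (simp add: distinct_map inj_on_subset[OF inj_on_inv_into])
    moreover have "set p0 \<subseteq> F" unfolding p0_def using that(3)
      by (auto simp: inv_into_into subsetD)
    moreover have "length p0 = k" unfolding p0_def using that(1) by simp
    ultimately show ?thesis using e2 by force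
  qed
  then show ?thesis using e1 by blast
qed



definition Zs :: "('a list \<Rightarrow> 'a list \<Rightarrow> 'a list set) \<Rightarrow> (nat \<Rightarrow> 'a list \<Rightarrow> 'a list) \<Rightarrow> nat \<Rightarrow> 'a list \<Rightarrow> 'a list set" where
  "Zs \<rho> c j \<sigma> = (if j = 0 then {} else \<rho> (c (j - 1) \<sigma>) (c j \<sigma>))"

definition Inv :: "'a list set \<Rightarrow> ('a list \<Rightarrow> 'a list \<Rightarrow> 'a list set) \<Rightarrow> 'a list set \<Rightarrow> nat \<Rightarrow> 'a list list set
   \<Rightarrow> nat \<Rightarrow> (nat \<Rightarrow> 'a list \<Rightarrow> 'a list) \<Rightarrow> (nat \<Rightarrow> 'a list set) \<Rightarrow> bool" where
  "Inv T \<rho> T0 k D n c P \<longleftrightarrow>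
    (\<forall>\<sigma>\<in>term_nodes T0. c 0 \<sigma> = \<sigma>) \<and>
    (\<forall>i<n. \<forall>\<sigma>\<in>term_nodes T0. strict_prefix (c i \<sigma>) (c (Suc i) \<sigma>) \<and> c (Suc i) \<sigma> \<in> T) \<and>
    P 0 = {} \<and>
    (\<forall>i\<le>n. finite (P i) \<and> P i \<subseteq> T) \<and>
    (\<forall>i\<le>n. \<forall>p\<in>P i. \<exists>j \<sigma> z. 1 \<le> j \<and> j < i \<and> \<sigma> \<in> term_nodes T0 \<and> z \<in> Zs \<rho> c j \<sigma> \<and> prefix z p \<and>
        (\<forall>i'. j < i' \<and> i' \<le> i \<longrightarrow> (\<exists>q\<in>P i'. prefix q p))) \<and>
    (\<forall>i\<le>n. \<forall>j \<sigma> z. 1 \<le> j \<and> j < i \<and> \<sigma> \<in> term_nodes T0 \<and> z \<in> Zs \<rho> c j \<sigma> \<longrightarrow> (\<exists>p\<in>P i. prefix z p)) \<and>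
    (\<forall>i. 1 \<le> i \<and> i \<le> n \<longrightarrow>
        (\<forall>p. length p = k \<and> distinct p \<and> set p \<subseteq> c i ` term_nodes T0 \<union> P i \<longrightarrow> p \<in> D))"

locale L4 =
  fixes T T0 :: "'a list set" and \<rho> :: "'a list \<Rightarrow> 'a list \<Rightarrow> 'a list set"
    and k :: nat and D :: "'a list list set"
  assumes perf: "perfect_tree T" and wt: "is_weight T \<rho>"
    and fs: "finite_subtree T0 T" and dens: "dense_open T k D"
begin

lemma T0_facts: "T0 \<subseteq> T" "finite T0" "is_tree T0" "term_nodes T0 \<subseteq> T0" "finite (term_nodes T0)"
  using fs unfolding finite_subtree_def term_nodes_def by (auto intro: finite_subset)

lemma inv_c_T:
  assumes I: "Inv T \<rho> T0 k D n c P" and "i \<le> n" "\<sigma> \<in> term_nodes T0"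
  shows "c i \<sigma> \<in> T"
proof (cases i)
  case 0
  then show ?thesis using I assms T0_facts unfolding Inv_def by auto
next
  case (Suc i')
  then show ?thesis using I assms unfolding Inv_def by auto
qed

lemma inv_c_mono:
  assumes I: "Inv T \<rho> T0 k D n c P" and "\<sigma> \<in> term_nodes T0"
  shows "i \<le> j \<Longrightarrow> j \<le> n \<Longrightarrow> prefix (c i \<sigma>) (c j \<sigma>)"
proof (induction j)
  case 0
  then show ?case by simp
next
  case (Suc j)
  show ?case
  proof (cases "i = Suc j")
    case True
    then show ?thesis by simp
  next
    case False
    then have "prefix (c i \<sigma>) (c j \<sigma>)" using Suc by auto
    moreover have "strict_prefix (c j \<sigma>) (c (Suc j) \<sigma>)" using I assms Suc.prems unfolding Inv_def by auto
    ultimately show ?thesis by (meson prefix_order.trans strict_prefix_def)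
  qed
qed

lemma inv_c_len:
  assumes I: "Inv T \<rho> T0 k D n c P" and "\<sigma> \<in> term_nodes T0" "i < j" "j \<le> n"
  shows "length (c i \<sigma>) < length (c j \<sigma>)"
proof -
  have "strict_prefix (c i \<sigma>) (c (Suc i) \<sigma>)" using I assms unfolding Inv_def by auto
  then have "length (c i \<sigma>) < length (c (Suc i) \<sigma>)" by (rule prefix_length_less)
  moreover have "prefix (c (Suc i) \<sigma>) (c j \<sigma>)" using inv_c_mono[OF I assms(2)] assms by auto
  ultimately show ?thesis using prefix_length_le by fastforce
qed

lemma inv_sigma_prefix:
  assumes I: "Inv T \<rho> T0 k D n c P" and "\<sigma> \<in> term_nodes T0" "i \<le> n"
  shows "prefix \<sigma> (c i \<sigma>)"
  using inv_c_mono[OF I assms(2), of 0 i] I assms unfolding Inv_def by auto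

lemma inv_Z:
  assumes I: "Inv T \<rho> T0 k D n c P" and "\<sigma> \<in> term_nodes T0" "1 \<le> j" "j \<le> n"
    and z: "z \<in> Zs \<rho> c j \<sigma>"
  shows "z \<in> T \<and> prefix (c (j - 1) \<sigma>) z \<and> \<not> prefix z (c j \<sigma>) \<and> \<not> prefix (c j \<sigma>) z"
proof -
  have T1: "c (j - 1) \<sigma> \<in> T" "c j \<sigma> \<in> T" using inv_c_T[OF I] assms by auto
  have zz: "z \<in> \<rho> (c (j - 1) \<sigma>) (c j \<sigma>)" using z assms unfolding Zs_def by auto
  then have z2: "z \<in> subtree_at T (c (j - 1) \<sigma>) - subtree_at T (c j \<sigma>)"
    using wt T1 unfolding is_weight_def by blast
  have pm: "prefix (c (j - 1) \<sigma>) (c j \<sigma>)" using inv_c_mono[OF I assms(2)] assms by auto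
  show ?thesis using z2 pm unfolding subtree_at_def
    by (auto intro: prefix_order.trans)
qed

lemma inv_Z_fin:
  assumes I: "Inv T \<rho> T0 k D n c P" and "\<sigma> \<in> term_nodes T0" "j \<le> n"
  shows "finite (Zs \<rho> c j \<sigma>)"
proof (cases "j = 0")
  case True
  then show ?thesis unfolding Zs_def by simp
next
  case False
  have T1: "c (j - 1) \<sigma> \<in> T" "c j \<sigma> \<in> T" using inv_c_T[OF I] assms by auto
  then show ?thesis using wt False unfolding is_weight_def Zs_def by auto
qed

lemma inv_Z_noext:
  assumes I: "Inv T \<rho> T0 k D n c P" and "\<sigma> \<in> term_nodes T0" "1 \<le> j" "j \<le> n"
    and z: "z \<in> Zs \<rho> c j \<sigma>" and "prefix z w"
  shows "\<not> prefix (c j \<sigma>) w"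
  using inv_Z[OF assms(1-5)] assms(6) prefix_same_cases by blast

lemma inv_base: "Inv T \<rho> T0 k D 0 (\<lambda>i \<sigma>. \<sigma>) (\<lambda>i. {})"
  unfolding Inv_def by auto

end


context L4 begin

lemma inv_step:
  assumes I: "Inv T \<rho> T0 k D n c P"
  shows "\<exists>c' P'. Inv T \<rho> T0 k D (Suc n) c' P'"
proof -
  let ?S = "term_nodes T0"
  note Is = I[unfolded Inv_def]
  note I1 = Is[THEN conjunct1]
  note I2 = Is[THEN conjunct2, THEN conjunct1]
  note I3 = Is[THEN conjunct2, THEN conjunct2, THEN conjunct1]
  note I4 = Is[THEN conjunct2, THEN conjunct2, THEN conjunct2, THEN conjunct1]
  note I5 = Is[THEN conjunct2, THEN conjunct2, THEN conjunct2, THEN conjunct2, THEN conjunct1]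
  note I6 = Is[THEN conjunct2, THEN conjunct2, THEN conjunct2, THEN conjunct2, THEN conjunct2, THEN conjunct1]
  note I7 = Is[THEN conjunct2, THEN conjunct2, THEN conjunct2, THEN conjunct2, THEN conjunct2, THEN conjunct2]
  have cT: "\<forall>\<sigma>\<in>?S. c n \<sigma> \<in> T" using inv_c_T[OF I] by auto
  have "\<forall>\<sigma>\<in>?S. \<exists>y. y \<in> T \<and> strict_prefix (c n \<sigma>) y" using cT strict_ext[OF perf] by blast
  then obtain d where d: "\<forall>\<sigma>\<in>?S. d \<sigma> \<in> T \<and> strict_prefix (c n \<sigma>) (d \<sigma>)" by metis
  define Zn where "Zn = (\<Union>\<sigma>\<in>?S. Zs \<rho> c n \<sigma>)"
  define F where "F = d ` ?S \<union> P n \<union> Zn"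
  have Znfin: "finite Zn" unfolding Zn_def using T0_facts inv_Z_fin[OF I] by auto
  have ZnT: "Zn \<subseteq> T"
  proof
    fix z assume "z \<in> Zn"
    then obtain \<sigma> where "\<sigma> \<in> ?S" "z \<in> Zs \<rho> c n \<sigma>" unfolding Zn_def by auto
    moreover then have "n \<noteq> 0" unfolding Zs_def by (cases "n = 0") auto
    ultimately show "z \<in> T" using inv_Z[OF I, of \<sigma> n z] by auto
  qed
  have Ffin: "finite F" unfolding F_def using Znfin I4 T0_facts by auto
  have FT: "F \<subseteq> T" unfolding F_def using ZnT I4 d by auto
  obtain e where e1: "\<forall>x\<in>F. prefix x (e x) \<and> e x \<in> T"
    and e3: "\<forall>p. length p = k \<and> distinct p \<and> set p \<subseteq> e ` F \<longrightarrow> p \<in> D"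
    using density[OF dens Ffin FT] by blast
  define c' where "c' = c(Suc n := (\<lambda>\<sigma>. e (d \<sigma>)))"
  define P' where "P' = P(Suc n := e ` (P n \<union> Zn))"
  have c'_eq: "c' i = c i" if "i \<le> n" for i using that by (simp add: c'_def)
  have P'_eq: "P' i = P i" if "i \<le> n" for i using that by (simp add: P'_def)
  have Z_eq: "Zs \<rho> c' j \<sigma> = Zs \<rho> c j \<sigma>" if "j \<le> n" for j \<sigma>
    using that by (auto simp add: Zs_def c'_def)
  have c'Sn: "c' (Suc n) = (\<lambda>\<sigma>. e (d \<sigma>))" by (simp add: c'_def)
  have P'Sn: "P' (Suc n) = e ` (P n \<union> Zn)" by (simp add: P'_def)
  have J1: "\<forall>\<sigma>\<in>?S. c' 0 \<sigma> = \<sigma>" using I1 c'_eq by auto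
  have J2: "\<forall>i<Suc n. \<forall>\<sigma>\<in>?S. strict_prefix (c' i \<sigma>) (c' (Suc i) \<sigma>) \<and> c' (Suc i) \<sigma> \<in> T"
  proof (intro allI impI ballI)
    fix i \<sigma> assume i: "i < Suc n" and s: "\<sigma> \<in> ?S"
    show "strict_prefix (c' i \<sigma>) (c' (Suc i) \<sigma>) \<and> c' (Suc i) \<sigma> \<in> T"
    proof (cases "i < n")
      case True
      then show ?thesis using I2 s c'_eq[of i] c'_eq[of "Suc i"] by auto
    next
      case False
      then have "i = n" using i by auto
      moreover have "prefix (d \<sigma>) (e (d \<sigma>))" "e (d \<sigma>) \<in> T" using e1 s unfolding F_def by auto
      ultimately show ?thesis using d s c'_eq[of n] c'Sn
        by (auto intro: prefix_order.less_le_trans)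
    qed
  qed
  have J3: "P' 0 = {}" using I3 P'_eq by auto
  have J4: "\<forall>i\<le>Suc n. finite (P' i) \<and> P' i \<subseteq> T"
  proof (intro allI impI)
    fix i assume "i \<le> Suc n"
    then consider "i \<le> n" | "i = Suc n" by linarith
    then show "finite (P' i) \<and> P' i \<subseteq> T"
    proof cases
      case 1 then show ?thesis using I4 P'_eq by auto
    next
      case 2
      have "finite (e ` (P n \<union> Zn))" using I4 Znfin by auto
      moreover have "e ` (P n \<union> Zn) \<subseteq> T" using e1 unfolding F_def by auto
      ultimately show ?thesis using 2 P'Sn by auto
    qed
  qed
  have J5: "\<forall>i\<le>Suc n. \<forall>p\<in>P' i. \<exists>j \<sigma> z. 1 \<le> j \<and> j < i \<and> \<sigma> \<in> ?S \<and> z \<in> Zs \<rho> c' j \<sigma> \<and> prefix z p \<and>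
        (\<forall>i'. j < i' \<and> i' \<le> i \<longrightarrow> (\<exists>q\<in>P' i'. prefix q p))"
  proof (intro allI impI ballI)
    fix i p assume i: "i \<le> Suc n" and p: "p \<in> P' i"
    then consider "i \<le> n" | "i = Suc n" by linarith
    then show "\<exists>j \<sigma> z. 1 \<le> j \<and> j < i \<and> \<sigma> \<in> ?S \<and> z \<in> Zs \<rho> c' j \<sigma> \<and> prefix z p \<and>
        (\<forall>i'. j < i' \<and> i' \<le> i \<longrightarrow> (\<exists>q\<in>P' i'. prefix q p))"
    proof cases
      case 1
      then have "p \<in> P i" using p P'_eq by auto
      then obtain j \<sigma> z where "1 \<le> j" "j < i" "\<sigma> \<in> ?S" "z \<in> Zs \<rho> c j \<sigma>" "prefix z p"
        "\<forall>i'. j < i' \<and> i' \<le> i \<longrightarrow> (\<exists>q\<in>P i'. prefix q p)" using I5 1 by blast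
      then show ?thesis using 1 Z_eq[of j] P'_eq
        by (intro exI[of _ j] exI[of _ \<sigma>] exI[of _ z]) auto
    next
      case 2
      then obtain x where x: "x \<in> P n \<union> Zn" "p = e x" using p P'Sn by auto
      have px: "prefix x p" using x e1 unfolding F_def by auto
      show ?thesis
      proof (cases "x \<in> P n")
        case True
        then obtain j \<sigma> z where jj: "1 \<le> j" "j < n" "\<sigma> \<in> ?S" "z \<in> Zs \<rho> c j \<sigma>" "prefix z x"
          and qq: "\<forall>i'. j < i' \<and> i' \<le> n \<longrightarrow> (\<exists>q\<in>P i'. prefix q x)" using I5 by blast
        have "\<forall>i'. j < i' \<and> i' \<le> i \<longrightarrow> (\<exists>q\<in>P' i'. prefix q p)"
        proof (intro allI impI)
          fix i' assume i': "j < i' \<and> i' \<le> i"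
          show "\<exists>q\<in>P' i'. prefix q p"
          proof (cases "i' \<le> n")
            case True
            then obtain q where "q \<in> P i'" "prefix q x" using qq i' by blast
            then show ?thesis using True P'_eq px by (auto intro: prefix_order.trans)
          next
            case False
            then have "i' = Suc n" using i' 2 by auto
            then show ?thesis using p 2 by auto
          qed
        qed
        moreover have "prefix z p" using jj(5) px by (auto intro: prefix_order.trans)
        ultimately show ?thesis using jj 2 Z_eq[of j]
          by (intro exI[of _ j] exI[of _ \<sigma>] exI[of _ z]) auto
      next
        case False
        then obtain \<sigma> where s: "\<sigma> \<in> ?S" "x \<in> Zs \<rho> c n \<sigma>" using x unfolding Zn_def by auto
        then have n0: "n \<noteq> 0" unfolding Zs_def by (cases "n = 0") auto
        have "\<forall>i'. n < i' \<and> i' \<le> i \<longrightarrow> (\<exists>q\<in>P' i'. prefix q p)"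
          using p 2 by (auto intro!: bexI[of _ p] simp: le_Suc_eq)
        then show ?thesis using s n0 2 Z_eq[of n] px
          by (intro exI[of _ n] exI[of _ \<sigma>] exI[of _ x]) auto
      qed
    qed
  qed
  have J6: "\<forall>i\<le>Suc n. \<forall>j \<sigma> z. 1 \<le> j \<and> j < i \<and> \<sigma> \<in> ?S \<and> z \<in> Zs \<rho> c' j \<sigma> \<longrightarrow> (\<exists>p\<in>P' i. prefix z p)"
  proof (intro allI impI)
    fix i j \<sigma> z assume i: "i \<le> Suc n" and h: "1 \<le> j \<and> j < i \<and> \<sigma> \<in> ?S \<and> z \<in> Zs \<rho> c' j \<sigma>"
    then have hz: "z \<in> Zs \<rho> c j \<sigma>" using Z_eq[of j] by auto
    consider "i \<le> n" | "i = Suc n" using i by linarith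
    then show "\<exists>p\<in>P' i. prefix z p"
    proof cases
      case 1
      then show ?thesis using I6 h hz P'_eq by auto
    next
      case 2
      show ?thesis
      proof (cases "j < n")
        case True
        then obtain p where "p \<in> P n" "prefix z p" using I6 h hz by blast
        moreover then have "prefix p (e p)" using e1 unfolding F_def by auto
        ultimately show ?thesis using 2 P'Sn by (auto intro: prefix_order.trans)
      next
        case False
        then have "j = n" using h 2 by auto
        then have "z \<in> Zn" using hz h unfolding Zn_def by auto
        moreover then have "prefix z (e z)" using e1 unfolding F_def by auto
        ultimately show ?thesis using 2 P'Sn by auto
      qed
    qed
  qed
  have J7: "\<forall>i. 1 \<le> i \<and> i \<le> Suc n \<longrightarrow>
        (\<forall>p. length p = k \<and> distinct p \<and> set p \<subseteq> c' i ` ?S \<union> P' i \<longrightarrow> p \<in> D)"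
  proof (intro allI impI)
    fix i p assume i: "1 \<le> i \<and> i \<le> Suc n" and p: "length p = k \<and> distinct p \<and> set p \<subseteq> c' i ` ?S \<union> P' i"
    consider "i \<le> n" | "i = Suc n" using i by linarith
    then show "p \<in> D"
    proof cases
      case 1
      have "c' i = c i" "P' i = P i" using 1 c'_eq P'_eq by auto
      then have "set p \<subseteq> c i ` ?S \<union> P i" using p by simp
      moreover have "1 \<le> i \<and> i \<le> n" using i 1 by simp
      ultimately show ?thesis using I7 p by blast
    next
      case 2
      have "c' i ` ?S \<union> P' i \<subseteq> e ` F" using 2 c'Sn P'Sn unfolding F_def by auto
      then have "set p \<subseteq> e ` F" using p by blast
      then show ?thesis using e3 p by blast
    qed
  qed
  have "Inv T \<rho> T0 k D (Suc n) c' P'" unfolding Inv_def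
    by (intro conjI J1 J2 J3 J4 J5 J6 J7)
  then show ?thesis by (intro exI)
qed

lemma inv_exists: "\<exists>c P. Inv T \<rho> T0 k D n c P"
proof (induction n)
  case 0
  show ?case using inv_base by (intro exI)
next
  case (Suc n)
  then obtain c P where "Inv T \<rho> T0 k D n c P" by blast
  then show ?case by (rule inv_step)
qed

end


context L4 begin

lemma final:
  assumes I: "Inv T \<rho> T0 k D (Suc k) c P"
  shows "\<exists>T1. finite_subtree T1 T \<and> rho_lhd \<rho> T0 T1 \<and>
     (\<forall>\<sigma>s \<sigma>s'. length \<sigma>s = k \<and> distinct \<sigma>s \<and> set \<sigma>s \<subseteq> term_nodes T0 \<and>
        length \<sigma>s' = k \<and> set \<sigma>s' \<subseteq> term_nodes T1 \<and>
        (\<forall>l<k. prefix (\<sigma>s ! l) (\<sigma>s' ! l)) \<longrightarrow> \<sigma>s' \<in> D)"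
proof -
  define n where "n = Suc k"
  have In: "Inv T \<rho> T0 k D n c P" using I n_def by simp
  let ?S = "term_nodes T0"
  note Is = In[unfolded Inv_def]
  note I1 = Is[THEN conjunct1]
  note I4 = Is[THEN conjunct2, THEN conjunct2, THEN conjunct2, THEN conjunct1]
  note I5 = Is[THEN conjunct2, THEN conjunct2, THEN conjunct2, THEN conjunct2, THEN conjunct1]
  note I6 = Is[THEN conjunct2, THEN conjunct2, THEN conjunct2, THEN conjunct2, THEN conjunct2, THEN conjunct1]
  note I7 = Is[THEN conjunct2, THEN conjunct2, THEN conjunct2, THEN conjunct2, THEN conjunct2, THEN conjunct2]
  have n1: "1 \<le> n" unfolding n_def by simp
  have Ttree: "is_tree T" using perf unfolding perfect_tree_def by simp
  define Zn where "Zn = (\<Union>\<sigma>\<in>?S. Zs \<rho> c n \<sigma>)"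
  define W where "W = c n ` ?S \<union> P n \<union> Zn"
  define T1 where "T1 = T0 \<union> {t. \<exists>w\<in>W. prefix t w}"
  have zcone: "prefix \<tau> z" if "z \<in> Zs \<rho> c j \<tau>" "1 \<le> j" "j \<le> n" "\<tau> \<in> ?S" for z j \<tau>
  proof -
    have "prefix (c (j - 1) \<tau>) z" using inv_Z[OF In that(4,2,3,1)] by simp
    moreover have "prefix \<tau> (c (j - 1) \<tau>)" using inv_sigma_prefix[OF In that(4)] that by simp
    ultimately show ?thesis by (rule prefix_order.trans[rotated])
  qed
  have Porig: "\<exists>j \<tau> z. 1 \<le> j \<and> j < n \<and> \<tau> \<in> ?S \<and> z \<in> Zs \<rho> c j \<tau> \<and> prefix z p \<and>
        (\<forall>i'. j < i' \<and> i' \<le> n \<longrightarrow> (\<exists>q\<in>P i'. prefix q p))" if "p \<in> P n" for p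
    using I5 that by blast
  have WT: "W \<subseteq> T"
  proof
    fix w assume "w \<in> W"
    then consider (a) "w \<in> c n ` ?S" | (b) "w \<in> P n" | (c) "w \<in> Zn" unfolding W_def by blast
    then show "w \<in> T"
    proof cases
      case a then show ?thesis using inv_c_T[OF In] by auto
    next
      case b then show ?thesis using I4 by auto
    next
      case c
      then obtain \<tau> where "\<tau> \<in> ?S" "w \<in> Zs \<rho> c n \<tau>" unfolding Zn_def by auto
      then show ?thesis using inv_Z[OF In, of \<tau> n w] n1 by auto
    qed
  qed
  have Wfin: "finite W" unfolding W_def Zn_def using T0_facts I4 inv_Z_fin[OF In] by auto
  have Wcone: "\<exists>\<tau>\<in>?S. prefix \<tau> w" if wW: "w \<in> W" for w
  proof -
    consider (a) "w \<in> c n ` ?S" | (b) "w \<in> P n" | (c) "w \<in> Zn" using wW unfolding W_def by blast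
    then show ?thesis
    proof cases
      case a then show ?thesis using inv_sigma_prefix[OF In] by auto
    next
      case b
      then obtain j \<tau> z where "1 \<le> j" "j < n" "\<tau> \<in> ?S" "z \<in> Zs \<rho> c j \<tau>" "prefix z w"
        using Porig by blast
      then show ?thesis using zcone[of z j \<tau>] by (auto intro: prefix_order.trans)
    next
      case c
      then obtain \<tau> where "\<tau> \<in> ?S" "w \<in> Zs \<rho> c n \<tau>" unfolding Zn_def by auto
      then show ?thesis using zcone[of w n \<tau>] n1 by auto
    qed
  qed
  have noext: "\<not> strict_prefix (c n \<sigma>) w" if "\<sigma> \<in> ?S" and wW: "w \<in> W" for \<sigma> w
  proof
    assume sp: "strict_prefix (c n \<sigma>) w"
    then have pw: "prefix (c n \<sigma>) w" by (simp add: strict_prefix_def)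
    have sw: "prefix \<sigma> w" using inv_sigma_prefix[OF In that(1), of n] pw by (auto intro: prefix_order.trans)
    consider (a) "w \<in> c n ` ?S" | (b) "w \<in> P n" | (c) "w \<in> Zn" using wW unfolding W_def by blast
    then show False
    proof cases
      case a
      then obtain \<tau> where t: "\<tau> \<in> ?S" "w = c n \<tau>" by auto
      then have "prefix \<tau> w" using inv_sigma_prefix[OF In t(1), of n] by simp
      then have "\<tau> = \<sigma>" using term_eq[OF t(1) that(1) _ sw] by simp
      then show False using sp t by simp
    next
      case b
      then obtain j \<tau> z where jj: "1 \<le> j" "j < n" "\<tau> \<in> ?S" "z \<in> Zs \<rho> c j \<tau>" "prefix z w"
        using Porig by blast
      then have "prefix \<tau> w" using zcone[of z j \<tau>] by (auto intro: prefix_order.trans)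
      then have "\<tau> = \<sigma>" using term_eq[OF jj(3) that(1) _ sw] by simp
      then have "\<not> prefix (c j \<sigma>) w" using inv_Z_noext[OF In jj(3) jj(1) _ jj(4) jj(5)] jj(2) by simp
      moreover have "prefix (c j \<sigma>) (c n \<sigma>)" using inv_c_mono[OF In that(1), of j n] jj by simp
      ultimately show False using pw by (auto intro: prefix_order.trans)
    next
      case c
      then obtain \<tau> where t: "\<tau> \<in> ?S" "w \<in> Zs \<rho> c n \<tau>" unfolding Zn_def by auto
      then have "prefix \<tau> w" using zcone[of w n \<tau>] n1 by simp
      then have "\<tau> = \<sigma>" using term_eq[OF t(1) that(1) _ sw] by simp
      then show False using inv_Z_noext[OF In t(1) n1 _ t(2), of w] pw by simp
    qed
  qed
  have T1T: "T1 \<subseteq> T"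
    unfolding T1_def using T0_facts WT Ttree unfolding is_tree_def by blast
  have T1fin: "finite T1"
  proof -
    have sub: "{t. \<exists>w\<in>W. prefix t w} \<subseteq> (\<Union>w\<in>W. set (prefixes w))" by auto
    have "finite (\<Union>w\<in>W. set (prefixes w))" using Wfin by simp
    then have "finite {t. \<exists>w\<in>W. prefix t w}" by (rule finite_subset[OF sub])
    then show ?thesis unfolding T1_def using T0_facts by simp
  qed
  have T1tree: "is_tree T1"
    using T0_facts unfolding T1_def is_tree_def by (auto intro: prefix_order.trans)
  have WT1: "W \<subseteq> T1" unfolding T1_def by auto
  have cT1: "c i \<sigma> \<in> T1" if "i \<le> n" "\<sigma> \<in> ?S" for i \<sigma>
    using inv_c_mono[OF In that(2), of i n] that unfolding T1_def W_def by auto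
  have cstrict: "strict_prefix \<sigma> (c n \<sigma>)" if "\<sigma> \<in> ?S" for \<sigma>
  proof -
    have "length (c 0 \<sigma>) < length (c n \<sigma>)" using inv_c_len[OF In that, of 0 n] n1 by simp
    moreover have "prefix \<sigma> (c n \<sigma>)" using inv_sigma_prefix[OF In that] by simp
    ultimately show ?thesis using I1 that by (auto simp: strict_prefix_def)
  qed
  have termW: "t \<in> W" if "t \<in> term_nodes T1" for t
  proof -
    have tT1: "t \<in> T1" and nt: "\<forall>u\<in>T1. \<not> strict_prefix t u" using that unfolding term_nodes_def by auto
    show ?thesis
    proof (cases "t \<in> T0")
      case True
      then obtain \<sigma> where s: "\<sigma> \<in> ?S" "prefix t \<sigma>" using below_term[OF _ True] T0_facts by blast
      then have "strict_prefix t (c n \<sigma>)" using cstrict[OF s(1)] by (auto intro: prefix_order.le_less_trans)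
      then show ?thesis using nt cT1[OF order_refl s(1)] by blast
    next
      case False
      then obtain w where w: "w \<in> W" "prefix t w" using tT1 unfolding T1_def by auto
      then have "t = w" using nt WT1 by (auto simp: strict_prefix_def)
      then show ?thesis using w by simp
    qed
  qed
  have cterm: "c n \<sigma> \<in> term_nodes T1" if s: "\<sigma> \<in> ?S" for \<sigma>
    unfolding term_nodes_def
  proof (safe)
    show "c n \<sigma> \<in> T1" using cT1[OF order_refl s] .
  next
    fix u assume u: "u \<in> T1" "strict_prefix (c n \<sigma>) u"
    show False
    proof (cases "u \<in> T0")
      case True
      have "strict_prefix \<sigma> u" using cstrict[OF s] u(2) by (auto intro: prefix_order.less_trans)
      then show False using s True unfolding term_nodes_def by auto
    next
      case False
      then obtain w where w: "w \<in> W" "prefix u w" using u unfolding T1_def by auto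
      then have "strict_prefix (c n \<sigma>) w" using u(2) by (auto intro: prefix_order.less_le_trans)
      then show False using noext[OF s w(1)] by simp
    qed
  qed
  have Sne: "?S \<noteq> {}"
  proof -
    obtain t where "t \<in> T0" using T0_facts unfolding is_tree_def by auto
    then show ?thesis using below_term[of T0 t] T0_facts by auto
  qed
  have sq: "sqsub T0 T1"
    unfolding sqsub_def
  proof (intro conjI ballI)
    obtain \<sigma> where s: "\<sigma> \<in> ?S" using Sne by auto
    have "c n \<sigma> \<notin> T0" using cstrict[OF s] s unfolding term_nodes_def by auto
    then show "T0 \<subset> T1" using cT1[OF order_refl s] unfolding T1_def by auto
  next
    fix t assume t: "t \<in> T1 - T0"
    then obtain w where w: "w \<in> W" "prefix t w" unfolding T1_def by auto
    then obtain \<tau> where tau: "\<tau> \<in> ?S" "prefix \<tau> w" using Wcone by blast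
    then have "prefix t \<tau> \<or> prefix \<tau> t" using w prefix_same_cases by blast
    moreover have "\<not> prefix t \<tau>" using t tau T0_facts unfolding is_tree_def by blast
    ultimately show "\<exists>\<sigma>\<in>?S. prefix \<sigma> t" using tau by blast
  qed
  have chain: "\<exists>ss. length ss \<ge> 2 \<and> distinct ss \<and> set ss \<subseteq> subtree_at T1 \<sigma> \<and>
        ss ! 0 = \<sigma> \<and> ss ! (length ss - 1) \<in> term_nodes T1 \<and>
        (\<forall>i. i + 1 < length ss \<longrightarrow> \<rho> (ss ! i) (ss ! (i + 1)) \<subseteq> T1)" if s: "\<sigma> \<in> ?S" for \<sigma>
  proof -
    define ss where "ss = map (\<lambda>i. c i \<sigma>) [0..<Suc n]"
    have len: "length ss = Suc n" unfolding ss_def by simp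
    have nth: "ss ! i = c i \<sigma>" if "i < Suc n" for i unfolding ss_def using that by (simp del: upt_Suc)
    have "inj_on (\<lambda>i. c i \<sigma>) {0..<Suc n}"
    proof (rule inj_onI)
      fix a b assume ab: "a \<in> {0..<Suc n}" "b \<in> {0..<Suc n}" "c a \<sigma> = c b \<sigma>"
      show "a = b"
      proof (rule ccontr)
        assume "a \<noteq> b"
        then consider "a < b" | "b < a" by linarith
        then show False
          using inv_c_len[OF In s, of a b] inv_c_len[OF In s, of b a] ab by (cases; auto)
      qed
    qed
    then have dist: "distinct ss" unfolding ss_def by (simp add: distinct_map del: upt_Suc)
    have sub: "set ss \<subseteq> subtree_at T1 \<sigma>"
      unfolding ss_def subtree_at_def using cT1 s inv_sigma_prefix[OF In s] by (auto simp del: upt_Suc)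
    have first: "ss ! 0 = \<sigma>" using nth[of 0] I1 s by simp
    have last: "ss ! (length ss - 1) \<in> term_nodes T1" using len nth[of n] cterm[OF s] by simp
    have rho: "\<rho> (ss ! i) (ss ! (i + 1)) \<subseteq> T1" if "i + 1 < length ss" for i
    proof
      fix z assume z: "z \<in> \<rho> (ss ! i) (ss ! (i + 1))"
      have zz: "z \<in> Zs \<rho> c (Suc i) \<sigma>" using z nth[of i] nth[of "Suc i"] that len unfolding Zs_def by simp
      show "z \<in> T1"
      proof (cases "Suc i < n")
        case True
        then have "\<exists>p\<in>P n. prefix z p" using I6[rule_format, of n "Suc i" \<sigma> z] zz s by simp
        then obtain p where "p \<in> P n" "prefix z p" by blast
        then show ?thesis unfolding T1_def W_def by auto
      next
        case False
        then have "Suc i = n" using that len by simp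
        then have "z \<in> Zn" using zz s unfolding Zn_def by auto
        then show ?thesis unfolding T1_def W_def by auto
      qed
    qed
    show ?thesis using len n1 dist sub first last rho by (intro exI[of _ ss]) auto
  qed
  have lhd: "rho_lhd \<rho> T0 T1" unfolding rho_lhd_def using sq chain by blast
  have cover: "\<exists>m. \<forall>i. 1 \<le> i \<and> i \<le> n \<and> i \<noteq> m \<longrightarrow> (\<exists>v\<in>c i ` ?S \<union> P i. prefix v w)"
    if wW: "w \<in> W" for w
  proof -
    consider (a) "w \<in> c n ` ?S" | (b) "w \<in> P n" | (c) "w \<in> Zn" using wW unfolding W_def by blast
    then show ?thesis
    proof cases
      case a
      then obtain \<tau> where t: "\<tau> \<in> ?S" "w = c n \<tau>" by auto
      have "\<forall>i. 1 \<le> i \<and> i \<le> n \<and> i \<noteq> 0 \<longrightarrow> (\<exists>v\<in>c i ` ?S \<union> P i. prefix v w)"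
        using inv_c_mono[OF In t(1)] t by blast
      then show ?thesis by blast
    next
      case b
      then obtain j \<tau> z where jj: "1 \<le> j" "j < n" "\<tau> \<in> ?S" "z \<in> Zs \<rho> c j \<tau>" "prefix z w"
        and qq: "\<forall>i'. j < i' \<and> i' \<le> n \<longrightarrow> (\<exists>q\<in>P i'. prefix q w)"
        using Porig by blast
      have pz: "prefix (c (j - 1) \<tau>) z" using inv_Z[OF In jj(3,1) _ jj(4)] jj(2) by simp
      have "\<forall>i. 1 \<le> i \<and> i \<le> n \<and> i \<noteq> j \<longrightarrow> (\<exists>v\<in>c i ` ?S \<union> P i. prefix v w)"
      proof (intro allI impI)
        fix i assume i: "1 \<le> i \<and> i \<le> n \<and> i \<noteq> j"
        show "\<exists>v\<in>c i ` ?S \<union> P i. prefix v w"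
        proof (cases "i < j")
          case True
          then have "prefix (c i \<tau>) (c (j - 1) \<tau>)" using inv_c_mono[OF In jj(3), of i "j - 1"] jj by simp
          then have "prefix (c i \<tau>) w" using pz jj(5) by (auto intro: prefix_order.trans)
          then show ?thesis using jj(3) by blast
        next
          case False
          then have "j < i" using i by simp
          then obtain q where "q \<in> P i" "prefix q w" using qq i by blast
          then show ?thesis by blast
        qed
      qed
      then show ?thesis by blast
    next
      case c
      then obtain \<tau> where t: "\<tau> \<in> ?S" "w \<in> Zs \<rho> c n \<tau>" unfolding Zn_def by auto
      have pz: "prefix (c (n - 1) \<tau>) w" using inv_Z[OF In t(1) n1 _ t(2)] by simp
      have "\<forall>i. 1 \<le> i \<and> i \<le> n \<and> i \<noteq> n \<longrightarrow> (\<exists>v\<in>c i ` ?S \<union> P i. prefix v w)"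
      proof (intro allI impI)
        fix i assume i: "1 \<le> i \<and> i \<le> n \<and> i \<noteq> n"
        then have "i \<le> n - 1" by linarith
        then have "prefix (c i \<tau>) (c (n - 1) \<tau>)" using inv_c_mono[OF In t(1), of i "n - 1"] by simp
        then have "prefix (c i \<tau>) w" using pz by (auto intro: prefix_order.trans)
        then show "\<exists>v\<in>c i ` ?S \<union> P i. prefix v w" using t(1) by blast
      qed
      then show ?thesis by blast
    qed
  qed
  have Gcone: "\<exists>\<tau>\<in>?S. prefix \<tau> v" if gi: "1 \<le> i" "i \<le> n" "v \<in> c i ` ?S \<union> P i" for i v
  proof (cases "v \<in> P i")
    case True
    then obtain j \<tau> z where jj: "1 \<le> j" "j < i" "\<tau> \<in> ?S" "z \<in> Zs \<rho> c j \<tau>" "prefix z v"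
      using I5 gi by blast
    then show ?thesis using zcone[of z j \<tau>] gi by (auto intro: prefix_order.trans)
  next
    case False
    then obtain \<tau> where "\<tau> \<in> ?S" "v = c i \<tau>" using gi by auto
    then show ?thesis using inv_sigma_prefix[OF In, of \<tau> i] gi by auto
  qed
  have Dpart: "\<sigma>s' \<in> D" if H: "length \<sigma>s = k" "distinct \<sigma>s" "set \<sigma>s \<subseteq> ?S"
     "length \<sigma>s' = k" "set \<sigma>s' \<subseteq> term_nodes T1" "\<forall>l<k. prefix (\<sigma>s ! l) (\<sigma>s' ! l)" for \<sigma>s \<sigma>s'
  proof -
    have uW: "\<sigma>s' ! l \<in> W" if "l < k" for l using H(4,5) termW that by (auto simp: nth_mem subsetD)
    have "\<forall>l. \<exists>m. l < k \<longrightarrow> (\<forall>i. 1 \<le> i \<and> i \<le> n \<and> i \<noteq> m \<longrightarrow> (\<exists>v\<in>c i ` ?S \<union> P i. prefix v (\<sigma>s' ! l)))"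
      using cover uW by blast
    then obtain mf where mf: "\<forall>l. l < k \<longrightarrow> (\<forall>i. 1 \<le> i \<and> i \<le> n \<and> i \<noteq> mf l \<longrightarrow> (\<exists>v\<in>c i ` ?S \<union> P i. prefix v (\<sigma>s' ! l)))"
      by (rule choice[THEN exE]) blast
    have "\<not> {1..n} \<subseteq> mf ` {..<k}"
    proof
      assume "{1..n} \<subseteq> mf ` {..<k}"
      then have "card {1..n} \<le> card (mf ` {..<k})" by (intro card_mono) auto
      also have "\<dots> \<le> k" using card_image_le[of "{..<k}" mf] by simp
      finally show False unfolding n_def by simp
    qed
    then obtain i where i0: "i \<in> {1..n}" "i \<notin> mf ` {..<k}" by blast
    then have i: "1 \<le> i" "i \<le> n" "i \<notin> mf ` {..<k}" by auto
    have "\<forall>l. \<exists>v. l < k \<longrightarrow> v \<in> c i ` ?S \<union> P i \<and> prefix v (\<sigma>s' ! l)"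
      using mf i by blast
    then obtain vf where vf: "\<forall>l. l < k \<longrightarrow> vf l \<in> c i ` ?S \<union> P i \<and> prefix (vf l) (\<sigma>s' ! l)"
      by (rule choice[THEN exE]) blast
    define vs where "vs = map vf [0..<k]"
    have vlen: "length vs = k" unfolding vs_def by simp
    have vnth: "vs ! l = vf l" if "l < k" for l unfolding vs_def using that by simp
    have vset: "set vs \<subseteq> c i ` ?S \<union> P i" unfolding vs_def using vf by auto
    have vdist: "distinct vs"
      unfolding distinct_conv_nth
    proof (intro allI impI)
      fix a b assume ab: "a < length vs" "b < length vs" "a \<noteq> b"
      show "vs ! a \<noteq> vs ! b"
      proof
        assume eq: "vs ! a = vs ! b"
        obtain \<tau> where t: "\<tau> \<in> ?S" "prefix \<tau> (vf a)" using Gcone[OF i(1,2), of "vf a"] vf ab vlen by auto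
        have ta: "prefix \<tau> (\<sigma>s' ! a)" using t vf ab vlen by (auto intro: prefix_order.trans)
        have tb: "prefix \<tau> (\<sigma>s' ! b)" using t vf ab vlen eq vnth by (auto intro: prefix_order.trans)
        have sa: "\<sigma>s ! a \<in> ?S" "\<sigma>s ! b \<in> ?S" using H ab vlen by (auto simp: nth_mem subsetD)
        have "\<sigma>s ! a = \<tau>" using term_eq[OF sa(1) t(1) _ ta] H(6) ab vlen by simp
        moreover have "\<sigma>s ! b = \<tau>" using term_eq[OF sa(2) t(1) _ tb] H(6) ab vlen by simp
        ultimately have "\<sigma>s ! a = \<sigma>s ! b" by simp
        then show False using H(1,2) ab vlen nth_eq_iff_index_eq by metis
      qed
    qed
    have vD: "vs \<in> D" using I7 i vlen vdist vset by blast
    have "set \<sigma>s' \<subseteq> T" using H(5) T1T unfolding term_nodes_def by auto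
    then have "\<sigma>s' \<in> power_tree T k" using H(4) unfolding power_tree_def by simp
    moreover have "prod_le \<sigma>s' vs" unfolding prod_le_def using vlen H(4) vnth vf by auto
    ultimately show ?thesis using vD dens unfolding dense_open_def by blast
  qed
  have "finite_subtree T1 T" unfolding finite_subtree_def using T1tree T1fin T1T by simp
  then show ?thesis using lhd Dpart by blast
qed

end

theorem lemma4p15:
  fixes T T0 :: "('a::countable) list set"
    and \<rho> :: "'a list \<Rightarrow> 'a list \<Rightarrow> 'a list set"
    and k :: nat and D :: "'a list list set"
  assumes "perfect_tree T"
    and "is_weight T \<rho>"
    and "finite_subtree T0 T"
    and "dense_open T k D"
  shows "\<exists>T1. finite_subtree T1 T \<and> rho_lhd \<rho> T0 T1 \<and>
     (\<forall>\<sigma>s \<sigma>s'. length \<sigma>s = k \<and> distinct \<sigma>s \<and> set \<sigma>s \<subseteq> term_nodes T0 \<and>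
        length \<sigma>s' = k \<and> set \<sigma>s' \<subseteq> term_nodes T1 \<and>
        (\<forall>l<k. prefix (\<sigma>s ! l) (\<sigma>s' ! l)) \<longrightarrow> \<sigma>s' \<in> D)"
proof -
  interpret L4 T T0 \<rho> k D using assms by unfold_locales
  obtain c P where "Inv T \<rho> T0 k D (Suc k) c P" using inv_exists by blast
  then show ?thesis by (rule final)
qed

end
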